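(* Let $r,s,t$ be integers with $1\le r\le s\le t$ and $n=r+s+t+1$. Then the $(2r+1)$-fault diameter of the exchanged 3-ary $n$-cube satisfies $D^{f}_{2r+1}(E3C(r,s,t))\ge r+s+t+4=n+3$.
   Context: The exchanged 3-ary $n$-cube $E3C(r,s,t)$ ($r,s,t\ge1$, $n=r+s+t+1$): vertices are strings $x=x[r+s+t]\cdots x[1]x[0]$ with all $x[i]\in\{0,1,2\}$, written $x=ABCd$ where $A=x[r+s+t]\cdots x[s+t+1]\in\{0,1,2\}^r$, $B=x[s+t]\cdots x[t+1]\in\{0,1,2\}^s$, $C=x[t]\cdots x[1]\in\{0,1,2\}^t$, $d=x[0]$. Two distinct vertices $x=ABCd$, $y=A'B'C'd'$ are adjacent iff one of: (E0) $A=A',B=B',C=C'$ and $d\ne d'$; (E1) $d=d'=0$, $A=A'$, $B=B'$ and $C,C'$ differ in exactly one position; (E2) $d=d'=1$, $A=A'$, $C=C'$ and $B,B'$ differ in exactly one position; (E3) $d=d'=2$, $B=B'$, $C=C'$ and $A,A'$ differ in exactly one position. For a connected graph $G$ and positive integer $\alpha\le\kappa(G)-1$ ($\kappa$ = vertex connectivity), the $\alpha$-fault diameter is $D^f_\alpha(G)=\max\{d_{G-F}(u,v): u\ne v\in V(G),\ F\subseteq V(G)\setminus\{u,v\},\ |F|=\alpha\}$, where $d_{G-F}$ is the shortest-path distance in $G-F$. (It is known that $\kappa(E3C(r,s,t))=2r+2$ when $r\le s\le t$.) *)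

theory Defs
  imports Main "HOL-Library.Extended_Nat"
begin

text \<open>Vertices of E3C(r,s,t): ternary strings x[r+s+t] ... x[1] x[0], represented as
  functions nat => nat with x i < 3 for i <= r+s+t and x i = 0 beyond (canonical padding).\<close>

definition e3c_vert :: "nat \<Rightarrow> nat \<Rightarrow> nat \<Rightarrow> (nat \<Rightarrow> nat) set" where
  "e3c_vert r s t = {x. \<forall>i. (i \<le> r+s+t \<longrightarrow> x i < 3) \<and> (r+s+t < i \<longrightarrow> x i = 0)}"

definition differ_one_in :: "nat set \<Rightarrow> (nat \<Rightarrow> nat) \<Rightarrow> (nat \<Rightarrow> nat) \<Rightarrow> bool" where
  "differ_one_in I x y \<longleftrightarrow> card {i\<in>I. x i \<noteq> y i} = 1 \<and> (\<forall>i. i \<notin> I \<longrightarrow> x i = y i)"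

definition e3c_adj :: "nat \<Rightarrow> nat \<Rightarrow> nat \<Rightarrow> (nat \<Rightarrow> nat) \<Rightarrow> (nat \<Rightarrow> nat) \<Rightarrow> bool" where
  "e3c_adj r s t x y \<longleftrightarrow> x \<in> e3c_vert r s t \<and> y \<in> e3c_vert r s t \<and> x \<noteq> y \<and>
     ( (\<forall>i. 1 \<le> i \<longrightarrow> x i = y i) \<and> x 0 \<noteq> y 0                       \<comment> \<open>E0\<close>
     \<or> (x 0 = 0 \<and> y 0 = 0 \<and> differ_one_in {1..t} x y)                 \<comment> \<open>E1: C part\<close>
     \<or> (x 0 = 1 \<and> y 0 = 1 \<and> differ_one_in {t+1..s+t} x y)             \<comment> \<open>E2: B part\<close>
     \<or> (x 0 = 2 \<and> y 0 = 2 \<and> differ_one_in {s+t+1..r+s+t} x y))       \<comment> \<open>E3: A part\<close>"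

definition walk_in :: "'a set \<Rightarrow> ('a \<Rightarrow> 'a \<Rightarrow> bool) \<Rightarrow> 'a list \<Rightarrow> bool" where
  "walk_in V E p \<longleftrightarrow> p \<noteq> [] \<and> set p \<subseteq> V \<and> (\<forall>i. Suc i < length p \<longrightarrow> E (p ! i) (p ! Suc i))"

text \<open>Shortest-path distance in the graph (V,E) (infinite if no path).\<close>
definition gdist :: "'a set \<Rightarrow> ('a \<Rightarrow> 'a \<Rightarrow> bool) \<Rightarrow> 'a \<Rightarrow> 'a \<Rightarrow> enat" where
  "gdist V E u v = (INF p \<in> {p. walk_in V E p \<and> hd p = u \<and> last p = v}. enat (length p - 1))"

definition fault_diam :: "'a set \<Rightarrow> ('a \<Rightarrow> 'a \<Rightarrow> bool) \<Rightarrow> nat \<Rightarrow> enat" where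
  "fault_diam V E \<alpha> = (SUP (u,v,F) \<in> {(u,v,F). u \<in> V \<and> v \<in> V \<and> u \<noteq> v \<and> F \<subseteq> V - {u,v} \<and> card F = \<alpha>}.
      gdist (V - F) E u v)"

end

theory Submission
  imports Defs
begin

definition cost :: "nat \<Rightarrow> bool \<Rightarrow> bool \<Rightarrow> nat" where
  "cost d a b = (if d = 0 then (if a \<and> b then 3 else if a \<or> b then 2 else 0)
     else if d = 1 then (if a then 2 else 1) else (if b then 2 else 1))"

definition ham :: "nat \<Rightarrow> (nat \<Rightarrow> nat) \<Rightarrow> nat" where
  "ham N x = card {i\<in>{1..N}. x i \<noteq> 1}"

definition needA :: "nat \<Rightarrow> nat \<Rightarrow> nat \<Rightarrow> (nat \<Rightarrow> nat) \<Rightarrow> bool" where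
  "needA r s t x = (\<exists>i\<in>{s+t+1..r+s+t}. x i \<noteq> 1)"

definition needB :: "nat \<Rightarrow> nat \<Rightarrow> (nat \<Rightarrow> nat) \<Rightarrow> bool" where
  "needB s t x = (\<exists>i\<in>{t+1..s+t}. x i \<noteq> 1)"

definition phi :: "nat \<Rightarrow> nat \<Rightarrow> nat \<Rightarrow> (nat \<Rightarrow> nat) \<Rightarrow> nat" where
  "phi r s t x = ham (r+s+t) x + cost (x 0) (needA r s t x) (needB s t x)"

lemma cost_le: "d < 3 \<Longrightarrow> e < 3 \<Longrightarrow> cost d a b \<le> cost e a b + 1"
  unfolding cost_def by (cases a; cases b; auto)

lemma diff_one: "differ_one_in I x y \<Longrightarrow> \<exists>j\<in>I. \<forall>i. i \<noteq> j \<longrightarrow> x i = y i"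
proof -
  assume h: "differ_one_in I x y"
  then obtain j where j: "{i\<in>I. x i \<noteq> y i} = {j}"
    unfolding differ_one_in_def by (auto simp: card_1_singleton_iff)
  have "j \<in> I" using j by blast
  moreover have "\<forall>i. i \<noteq> j \<longrightarrow> x i = y i"
  proof (intro allI impI)
    fix i assume "i \<noteq> j"
    show "x i = y i"
    proof (cases "i \<in> I")
      case True then show ?thesis using j \<open>i \<noteq> j\<close> by blast
    next
      case False then show ?thesis using h unfolding differ_one_in_def by blast
    qed
  qed
  ultimately show ?thesis by blast
qed

lemma ham_le: "\<forall>i. i \<noteq> j \<longrightarrow> x i = y i \<Longrightarrow> ham N x \<le> ham N y + 1"
proof -
  assume h: "\<forall>i. i \<noteq> j \<longrightarrow> x i = y i"
  have "{i\<in>{1..N}. x i \<noteq> 1} \<subseteq> insert j {i\<in>{1..N}. y i \<noteq> 1}" using h by auto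
  hence "card {i\<in>{1..N}. x i \<noteq> 1} \<le> card (insert j {i\<in>{1..N}. y i \<noteq> 1})"
    by (intro card_mono) auto
  also have "\<dots> \<le> card {i\<in>{1..N}. y i \<noteq> 1} + 1" by (simp add: card_insert_if)
  finally show ?thesis unfolding ham_def .
qed

lemma phi_lip:
  assumes "e3c_adj r s t x y"
  shows "phi r s t x \<le> phi r s t y + 1"
proof -
  have x0: "x 0 < 3" and y0: "y 0 < 3" using assms unfolding e3c_adj_def e3c_vert_def by auto
  consider (E0) "(\<forall>i. 1 \<le> i \<longrightarrow> x i = y i)"
    | (E1) "x 0 = 0" "y 0 = 0" "differ_one_in {1..t} x y"
    | (E2) "x 0 = 1" "y 0 = 1" "differ_one_in {t+1..s+t} x y"
    | (E3) "x 0 = 2" "y 0 = 2" "differ_one_in {s+t+1..r+s+t} x y"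
    using assms unfolding e3c_adj_def by (elim conjE disjE) auto
  then show ?thesis
  proof cases
    case E0
    have "ham (r+s+t) x = ham (r+s+t) y" unfolding ham_def using E0
      by (intro arg_cong[where f=card]) auto
    moreover have "needA r s t x = needA r s t y" unfolding needA_def using E0 by auto
    moreover have "needB s t x = needB s t y" unfolding needB_def using E0 by auto
    ultimately show ?thesis unfolding phi_def using cost_le[OF x0 y0] by simp
  next
    case E1
    then obtain j where j: "j \<in> {1..t}" "\<forall>i. i \<noteq> j \<longrightarrow> x i = y i" using diff_one by blast
    have "needA r s t x = needA r s t y" unfolding needA_def using j by auto
    moreover have "needB s t x = needB s t y" unfolding needB_def using j by auto
    ultimately show ?thesis unfolding phi_def using ham_le[OF j(2), of "r+s+t"] E1 by simp
  next
    case E2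
    then obtain j where j: "j \<in> {t+1..s+t}" "\<forall>i. i \<noteq> j \<longrightarrow> x i = y i" using diff_one by blast
    have "needA r s t x = needA r s t y" unfolding needA_def using j by auto
    then show ?thesis unfolding phi_def using ham_le[OF j(2), of "r+s+t"] E2 by (simp add: cost_def)
  next
    case E3
    then obtain j where j: "j \<in> {s+t+1..r+s+t}" "\<forall>i. i \<noteq> j \<longrightarrow> x i = y i" using diff_one by blast
    have "needB s t x = needB s t y" unfolding needB_def using j by auto
    then show ?thesis unfolding phi_def using ham_le[OF j(2), of "r+s+t"] E3 by (simp add: cost_def)
  qed
qed

lemma walk_bound:
  assumes "walk_in V E (a # q)" and "\<And>x y. E x y \<Longrightarrow> (f x :: nat) \<le> f y + 1"
  shows "f a \<le> f (last (a # q)) + length q"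
  using assms(1)
proof (induction q arbitrary: a)
  case Nil then show ?case by simp
next
  case (Cons b q)
  have "E a b" using Cons.prems unfolding walk_in_def by (metis length_Cons nth_Cons_0 nth_Cons_Suc zero_less_Suc Suc_less_eq)
  moreover have "walk_in V E (b # q)"
  proof -
    have w: "set (a # b # q) \<subseteq> V" "\<forall>i. Suc i < length (a # b # q) \<longrightarrow> E ((a # b # q) ! i) ((a # b # q) ! Suc i)"
      using Cons.prems unfolding walk_in_def by blast+
    have "\<forall>i. Suc i < length (b # q) \<longrightarrow> E ((b # q) ! i) ((b # q) ! Suc i)"
    proof (intro allI impI)
      fix i assume "Suc i < length (b # q)"
      hence "Suc (Suc i) < length (a # b # q)" by simp
      hence "E ((a # b # q) ! Suc i) ((a # b # q) ! Suc (Suc i))" using w(2) by blast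
      thus "E ((b # q) ! i) ((b # q) ! Suc i)" by simp
    qed
    thus ?thesis using w(1) unfolding walk_in_def by simp
  qed
  ultimately show ?case using Cons.IH assms(2)[of a b] by fastforce
qed


lemma walk_tail:
  assumes "walk_in V E (a # b # q)"
  shows "walk_in V E (b # q)" "E a b" "a \<in> V"
proof -
  have w: "set (a # b # q) \<subseteq> V" "\<forall>i. Suc i < length (a # b # q) \<longrightarrow> E ((a # b # q) ! i) ((a # b # q) ! Suc i)"
    using assms unfolding walk_in_def by blast+
  have "\<forall>i. Suc i < length (b # q) \<longrightarrow> E ((b # q) ! i) ((b # q) ! Suc i)"
  proof (intro allI impI)
    fix i assume "Suc i < length (b # q)"
    hence "Suc (Suc i) < length (a # b # q)" by simp
    hence "E ((a # b # q) ! Suc i) ((a # b # q) ! Suc (Suc i))" using w(2) by blast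
    thus "E ((b # q) ! i) ((b # q) ! Suc i)" by simp
  qed
  thus "walk_in V E (b # q)" using w(1) unfolding walk_in_def by simp
  have "Suc 0 < length (a # b # q)" by simp
  hence "E ((a # b # q) ! 0) ((a # b # q) ! Suc 0)" using w(2) by blast
  thus "E a b" by simp
  show "a \<in> V" using w(1) by simp
qed

definition uu :: "nat \<Rightarrow> nat" where "uu = (\<lambda>i. if i = 0 then 2 else 0)"
definition u0 :: "nat \<Rightarrow> nat" where "u0 = (\<lambda>i. 0)"
definition u1 :: "nat \<Rightarrow> nat" where "u1 = (\<lambda>i. if i = 0 then 1 else 0)"
definition vv :: "nat \<Rightarrow> nat \<Rightarrow> nat" where "vv N = (\<lambda>i. if 1 \<le> i \<and> i \<le> N then 1 else 0)"
definition FF :: "nat \<Rightarrow> nat \<Rightarrow> nat \<Rightarrow> (nat \<Rightarrow> nat) set" where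
  "FF r s t = insert u1 ((\<lambda>(j,c). uu(j:=c)) ` ({s+t+1..r+s+t} \<times> {1,2}))"

lemma card_FF: "card (FF r s t) = 2*r+1"
proof -
  have inj: "inj_on (\<lambda>(j,c). uu(j:=c)) ({s+t+1..r+s+t} \<times> {1::nat,2})"
  proof (rule inj_onI, clarify)
    fix j c j' c' assume h: "uu(j := c) = uu(j' := c')" "j \<in> {s+t+1..r+s+t}" "c \<in> {1::nat,2}"
      "j' \<in> {s+t+1..r+s+t}" "c' \<in> {1::nat,2}"
    have "j = j'"
    proof (rule ccontr)
      assume "j \<noteq> j'"
      hence "(uu(j := c)) j = c" "(uu(j' := c')) j = 0" using h(2) by (auto simp: uu_def)
      thus False using h by auto
    qed
    moreover have "c = c'" using fun_cong[OF h(1), of j] \<open>j = j'\<close> by simp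
    ultimately show "j = j' \<and> c = c'" by simp
  qed
  have "u1 \<notin> (\<lambda>(j,c). uu(j:=c)) ` ({s+t+1..r+s+t} \<times> {1,2})"
  proof
    assume "u1 \<in> (\<lambda>(j,c). uu(j:=c)) ` ({s+t+1..r+s+t} \<times> {1,2})"
    then obtain x where x: "x \<in> {s+t+1..r+s+t} \<times> {1::nat,2}" "u1 = (\<lambda>(j,c). uu(j:=c)) x" by blast
    obtain j c where "x = (j, c)" by (cases x)
    hence j1: "j \<ge> 1" and ueq: "u1 = uu(j:=c)" using x by auto
    have "(uu(j:=c)) 0 = uu 0" using j1 by (intro fun_upd_other) simp
    hence "u1 0 = uu 0" using ueq by metis
    thus False by (simp add: u1_def uu_def)
  qed
  moreover have "card ((\<lambda>(j,c). uu(j:=c)) ` ({s+t+1..r+s+t} \<times> {1::nat,2})) = 2*r"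
    using card_image[OF inj] by (simp add: card_cartesian_product)
  ultimately show ?thesis unfolding FF_def by (simp add: card_insert_if)
qed

lemma nbr_uu:
  assumes "e3c_adj r s t uu b" "b \<notin> FF r s t"
  shows "b = u0"
proof -
  have bV: "b \<in> e3c_vert r s t" using assms unfolding e3c_adj_def by blast
  have "uu \<noteq> b" using assms unfolding e3c_adj_def by blast
  consider (E0) "(\<forall>i. 1 \<le> i \<longrightarrow> uu i = b i)" "uu 0 \<noteq> b 0"
    | (E3) "b 0 = 2" "differ_one_in {s+t+1..r+s+t} uu b"
    using assms(1) unfolding e3c_adj_def by (auto simp: uu_def)
  then show ?thesis
  proof cases
    case E0
    have "b 0 < 3" using bV unfolding e3c_vert_def by auto
    hence "b 0 = 0 \<or> b 0 = 1" using E0 by (auto simp: uu_def)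
    moreover have "\<forall>i. 1 \<le> i \<longrightarrow> b i = 0" using E0 by (auto simp: uu_def)
    ultimately have "b = u0 \<or> b = u1" unfolding u0_def u1_def
      by (metis (mono_tags, lifting) One_nat_def less_one not_less)
    thus ?thesis using assms(2) unfolding FF_def by auto
  next
    case E3
    then obtain j where j: "j \<in> {s+t+1..r+s+t}" "\<forall>i. i \<noteq> j \<longrightarrow> uu i = b i" using diff_one by blast
    have "b j < 3" using bV j(1) unfolding e3c_vert_def by auto
    have b_eq: "b = uu(j := b j)" using j by auto
    have "b j \<noteq> 0"
    proof
      assume "b j = 0"
      hence "b = uu" using b_eq j(1) by (metis fun_upd_triv uu_def le_zero_eq not_one_le_zero atLeastAtMost_iff add_is_0 Suc_eq_plus1 nat.distinct(1))
      thus False using \<open>uu \<noteq> b\<close> by simp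
    qed
    hence "b j \<in> {1,2}" using \<open>b j < 3\<close> by auto
    hence "(j, b j) \<in> {s+t+1..r+s+t} \<times> {1,2}" using j(1) by blast
    hence "b \<in> FF r s t" unfolding FF_def using b_eq by (metis (no_types, lifting) case_prod_conv image_eqI insertCI)
    thus ?thesis using assms(2) by blast
  qed
qed


lemma neq_at: "f i \<noteq> g i \<Longrightarrow> f \<noteq> g" by auto

theorem theorem1:
  fixes r s t :: nat
  assumes "1 \<le> r" and "r \<le> s" and "s \<le> t"
  shows "fault_diam (e3c_vert r s t) (e3c_adj r s t) (2*r+1) \<ge> enat (r+s+t+4)"
proof -
  let ?V = "e3c_vert r s t" and ?E = "e3c_adj r s t" and ?N = "r+s+t"
  have uuV: "uu \<in> ?V" unfolding e3c_vert_def uu_def by auto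
  have vvV: "vv ?N \<in> ?V" unfolding e3c_vert_def vv_def by auto
  have uv: "uu \<noteq> vv ?N"
  proof
    assume "uu = vv ?N"
    hence "uu 0 = vv ?N 0" by simp
    thus False by (simp add: uu_def vv_def)
  qed
  have u1V: "u1 \<in> ?V" unfolding e3c_vert_def u1_def by auto
  have FV: "FF r s t \<subseteq> ?V - {uu, vv ?N}"
  proof
    fix x assume "x \<in> FF r s t"
    then consider "x = u1" | j c where "j \<in> {s+t+1..r+s+t}" "c \<in> {1::nat,2}" "x = uu(j:=c)"
    proof -
      assume a1: "x = u1 \<Longrightarrow> thesis" and a2: "\<And>j c. j \<in> {s+t+1..r+s+t} \<Longrightarrow> c \<in> {1::nat,2} \<Longrightarrow> x = uu(j:=c) \<Longrightarrow> thesis"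
      assume "x \<in> FF r s t"
      hence "x = u1 \<or> x \<in> (\<lambda>(j,c). uu(j:=c)) ` ({s+t+1..r+s+t} \<times> {1::nat,2})" unfolding FF_def by blast
      thus thesis
      proof
        assume "x = u1" thus thesis by (rule a1)
      next
        assume "x \<in> (\<lambda>(j,c). uu(j:=c)) ` ({s+t+1..r+s+t} \<times> {1::nat,2})"
        then obtain y where y: "y \<in> {s+t+1..r+s+t} \<times> {1::nat,2}" "x = (\<lambda>(j,c). uu(j:=c)) y" by blast
        obtain j c where "y = (j, c)" by (cases y)
        thus thesis using y a2 by auto
      qed
    qed
    then show "x \<in> ?V - {uu, vv ?N}"
    proof cases
      case 1
      have "u1 \<noteq> uu" by (rule neq_at[where i=0]) (simp add: u1_def uu_def)
      moreover have "u1 \<noteq> vv ?N" by (rule neq_at[where i=0]) (simp add: u1_def vv_def)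
      ultimately show ?thesis using 1 u1V by simp
    next
      case 2
      have "x \<in> ?V" using 2 unfolding e3c_vert_def uu_def by auto
      moreover have "x \<noteq> uu" by (rule neq_at[where i=j]) (use 2 in \<open>auto simp: uu_def\<close>)
      moreover have "x \<noteq> vv ?N" by (rule neq_at[where i=0]) (use 2 in \<open>auto simp: uu_def vv_def\<close>)
      ultimately show ?thesis by blast
    qed
  qed
  have mem: "(uu, vv ?N, FF r s t) \<in> {(u,v,F). u \<in> ?V \<and> v \<in> ?V \<and> u \<noteq> v \<and> F \<subseteq> ?V - {u,v} \<and> card F = 2*r+1}"
    using uuV vvV uv FV card_FF by auto
  have phi0: "phi r s t u0 = ?N + 3"
  proof -
    have "{i\<in>{1..?N}. u0 i \<noteq> 1} = {1..?N}" unfolding u0_def by auto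
    hence "ham ?N u0 = ?N" unfolding ham_def by simp
    moreover have "needA r s t u0" unfolding needA_def u0_def using assms
      by (intro bexI[of _ "s+t+1"]) auto
    moreover have "needB s t u0" unfolding needB_def u0_def using assms
      by (intro bexI[of _ "t+1"]) auto
    ultimately show ?thesis unfolding phi_def cost_def by (simp add: u0_def)
  qed
  have phiv: "phi r s t (vv ?N) = 0"
  proof -
    have "{i\<in>{1..?N}. vv ?N i \<noteq> 1} = {}" unfolding vv_def by auto
    hence "ham ?N (vv ?N) = 0" unfolding ham_def by simp
    moreover have "\<not> needA r s t (vv ?N)" unfolding needA_def vv_def by auto
    moreover have "\<not> needB s t (vv ?N)" unfolding needB_def vv_def by auto
    ultimately show ?thesis unfolding phi_def cost_def by (simp add: vv_def)
  qed
  have "gdist (?V - FF r s t) ?E uu (vv ?N) \<ge> enat (?N + 4)"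
    unfolding gdist_def
  proof (rule INF_greatest)
    fix p assume "p \<in> {p. walk_in (?V - FF r s t) ?E p \<and> hd p = uu \<and> last p = vv ?N}"
    hence w: "walk_in (?V - FF r s t) ?E p" and h: "hd p = uu" and l: "last p = vv ?N" by auto
    have "p \<noteq> []" using w unfolding walk_in_def by simp
    then obtain q where p: "p = uu # q" using h by (cases p) auto
    have "q \<noteq> []" using p l uv by auto
    then obtain b q' where q: "q = b # q'" by (cases q) auto
    have wt: "walk_in (?V - FF r s t) ?E (b # q')" and e: "?E uu b"
      using walk_tail[of _ _ uu b q'] w p q by auto
    have "b \<in> set (b # q')" by simp
    hence "b \<notin> FF r s t" using wt unfolding walk_in_def by blast
    hence "b = u0" using nbr_uu e by blast
    have "phi r s t b \<le> phi r s t (last (b # q')) + length q'"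
      by (rule walk_bound[where f="phi r s t", OF wt phi_lip])
    moreover have "last (b # q') = vv ?N" using l p q by simp
    ultimately have "phi r s t u0 \<le> phi r s t (vv ?N) + length q'" using \<open>b = u0\<close> by simp
    hence "?N + 3 \<le> length q'" unfolding phi0 phiv by simp
    hence "?N + 4 \<le> length p - 1" using p q by simp
    thus "enat (?N + 4) \<le> enat (length p - 1)" by simp
  qed
  also have "\<dots> \<le> fault_diam ?V ?E (2*r+1)"
    unfolding fault_diam_def by (rule SUP_upper2[OF mem]) simp
  finally show ?thesis .
qed

end
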